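(* Let $P\subseteq\mathbb R^n$ be a finite set, let $\alpha_0,\epsilon\ge0$, and let $P_0,P_1,\dots,P_m$ be finite sets with $P_0=P$ and, for each $k=0,\dots,m-1$, $P_{k+1}$ an $\alpha_0\epsilon^2(1+\epsilon)^{k-1}$-net of $P_k$. Then for every $k=0,\dots,m-1$, $$U(P;\alpha_0(1+\epsilon)^k)\subseteq U(P_{k+1};\alpha_0(1+\epsilon)^{k+1}).$$
   Context: For $\delta\ge0$, a subset $P'\subseteq Q$ is a $\delta$-net of $Q$ if (1) for every $q\in Q$ there is $q'\in P'$ with $\|q-q'\|\le\delta$, and (2) any two distinct $p,q\in P'$ satisfy $\|p-q\|>\delta$. For a finite $S\subseteq\mathbb R^n$ and $r\ge0$, $U(S;r)=\bigcup_{s\in S}B(s;r)$, where $B(s;r)$ is the open Euclidean ball of radius $r$ about $s$ for $r>0$, and $B(s;0)=\{s\}$. *)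

theory Defs
  imports "HOL-Analysis.Analysis"
begin

definition is_net :: "real \<Rightarrow> 'a::metric_space set \<Rightarrow> 'a set \<Rightarrow> bool" where
  "is_net \<delta> P' Q \<longleftrightarrow> P' \<subseteq> Q \<and>
     (\<forall>q\<in>Q. \<exists>q'\<in>P'. dist q q' \<le> \<delta>) \<and>
     (\<forall>p\<in>P'. \<forall>q\<in>P'. p \<noteq> q \<longrightarrow> dist p q > \<delta>)"

definition B :: "'a::metric_space \<Rightarrow> real \<Rightarrow> 'a set" where
  "B s r = (if r = 0 then {s} else ball s r)"

definition U :: "'a::metric_space set \<Rightarrow> real \<Rightarrow> 'a set" where
  "U S r = (\<Union>s\<in>S. B s r)"

end

theory Submission
  imports Defs
begin

lemma powi_shift: "(c::real) > 0 \<Longrightarrow> c powi (int j - 1) = c ^ j / c"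
  by (simp add: power_int_diff)

lemma geo_bound:
  fixes e :: real assumes "e \<ge> 0"
  shows "(\<Sum>j<n. e^2 * (1+e) powi (int j - 1)) \<le> e * (1+e) ^ n / (1+e)"
proof (induction n)
  case 0 then show ?case using assms by simp
next
  case (Suc n)
  have "(\<Sum>j<Suc n. e^2 * (1+e) powi (int j - 1)) \<le> e * (1+e) ^ n / (1+e) + e^2 * ((1+e)^n/(1+e))"
    using Suc assms by (simp add: powi_shift)
  also have "\<dots> = e * (1+e)^Suc n / (1+e)"
    using assms by (simp add: add_divide_distrib[symmetric] power2_eq_square algebra_simps)
  finally show ?case .
qed

theorem lemma19:
  fixes P :: "'a::euclidean_space set"
    and Ps :: "nat \<Rightarrow> 'a set"
    and \<alpha>0 \<epsilon> :: real and m :: nat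
  assumes "finite P"
    and "\<alpha>0 \<ge> 0" and "\<epsilon> \<ge> 0"
    and "\<And>k. k \<le> m \<Longrightarrow> finite (Ps k)"
    and "Ps 0 = P"
    and "\<And>k. k < m \<Longrightarrow> is_net (\<alpha>0 * \<epsilon>^2 * (1 + \<epsilon>) powi (int k - 1)) (Ps (Suc k)) (Ps k)"
  shows "\<forall>k<m. U P (\<alpha>0 * (1 + \<epsilon>) ^ k) \<subseteq> U (Ps (Suc k)) (\<alpha>0 * (1 + \<epsilon>) ^ (Suc k))"
proof (intro allI impI subsetI)
  define S where "S n = (\<Sum>j<n. \<alpha>0 * \<epsilon>^2 * (1 + \<epsilon>) powi (int j - 1))" for n
  have chain: "\<forall>p\<in>P. \<exists>q\<in>Ps n. dist p q \<le> S n" if "n \<le> m" for n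
    using that
  proof (induction n)
    case 0 then show ?case using assms(5) by (simp add: S_def)
  next
    case (Suc n)
    show ?case
    proof
      fix p assume p: "p \<in> P"
      from Suc p obtain q where q: "q \<in> Ps n" "dist p q \<le> S n" by auto
      from assms(6)[of n] Suc.prems q(1) obtain q' where
        q': "q' \<in> Ps (Suc n)" "dist q q' \<le> \<alpha>0 * \<epsilon>^2 * (1 + \<epsilon>) powi (int n - 1)"
        unfolding is_net_def by auto
      have "dist p q' \<le> dist p q + dist q q'" by (rule dist_triangle)
      also have "\<dots> \<le> S (Suc n)" using q q' by (simp add: S_def)
      finally show "\<exists>q\<in>Ps (Suc n). dist p q \<le> S (Suc n)" using q' by blast
    qed
  qed
  fix k x assume k: "k < m" and x: "x \<in> U P (\<alpha>0 * (1 + \<epsilon>) ^ k)"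
  from x obtain p where p: "p \<in> P" "x \<in> B p (\<alpha>0 * (1 + \<epsilon>) ^ k)" unfolding U_def by auto
  from chain[of "Suc k"] k p obtain q where q: "q \<in> Ps (Suc k)" "dist p q \<le> S (Suc k)" by auto
  have Sb: "S (Suc k) \<le> \<alpha>0 * (\<epsilon> * (1+\<epsilon>) ^ Suc k / (1+\<epsilon>))"
  proof -
    have "S (Suc k) = \<alpha>0 * (\<Sum>j<Suc k. \<epsilon>^2 * (1+\<epsilon>) powi (int j - 1))"
      unfolding S_def sum_distrib_left by (simp add: mult.assoc)
    also have "\<dots> \<le> \<alpha>0 * (\<epsilon> * (1+\<epsilon>) ^ Suc k / (1+\<epsilon>))"
      using geo_bound[OF assms(3), of "Suc k"] assms(2) by (intro mult_left_mono)
    finally show ?thesis .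
  qed
  show "x \<in> U (Ps (Suc k)) (\<alpha>0 * (1 + \<epsilon>) ^ Suc k)"
  proof (cases "\<alpha>0 = 0")
    case True
    then have "x = p" using p(2) by (auto simp: B_def)
    have "dist p q \<le> 0" using True q(2) Sb by (simp only: mult_zero_left)
    then have "x = q" using \<open>x = p\<close> by simp
    then show ?thesis using q True by (auto simp: U_def B_def)
  next
    case False
    then have a: "\<alpha>0 > 0" using assms(2) by simp
    have pos: "(1+\<epsilon>)^k > 0" using assms(3) by simp
    have "\<alpha>0 * (1 + \<epsilon>) ^ k \<noteq> 0" using a pos by (metis less_irrefl mult_pos_pos)
    then have "dist x p < \<alpha>0 * (1 + \<epsilon>) ^ k" using p(2) unfolding B_def by (simp only: if_False mem_ball dist_commute)
    moreover have "\<alpha>0 * (\<epsilon> * (1+\<epsilon>) ^ Suc k / (1+\<epsilon>)) = \<alpha>0 * \<epsilon> * (1+\<epsilon>)^k"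
      using assms(3) by (simp add: field_simps)
    ultimately have "dist x q < \<alpha>0 * (1 + \<epsilon>) ^ k + \<alpha>0 * \<epsilon> * (1+\<epsilon>)^k"
      using dist_triangle[of x q p] q(2) Sb by linarith
    also have "\<dots> = \<alpha>0 * (1 + \<epsilon>) ^ Suc k" by (simp add: algebra_simps)
    finally have "dist x q < \<alpha>0 * (1 + \<epsilon>) ^ Suc k" .
    moreover have "\<alpha>0 * (1 + \<epsilon>) ^ Suc k \<noteq> 0" using a assms(3) by simp
    ultimately show ?thesis using q(1) by (auto simp: U_def B_def dist_commute)
  qed
qed

end
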